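(* There is a universal constant $C'>0$ such that the following holds. Let $(\Omega,Q,\pi)$ be a reversible Markov chain on a finite set and let $f$ be a positive function on $\Omega$ with $\mathbb E_\pi f=1$ and $f(\omega)\ge\delta$ for all $\omega\in\Omega$, where $\delta\in(0,1/2]$. Then $$\sum_{\omega\in\Omega}\pi(\omega)\,(f(\omega)-1)\log f(\omega)\le C'\,|\log\delta|\,{\rm Ent}_\pi(f).$$
   Context: ${\rm Ent}_\pi(f):=\mathbb E_\pi[f(\log f-\log\mathbb E_\pi f)]$. *)

theory Defs
  imports Complex_Main
begin

definition reversible_markov_chain ::
  "'a set \<Rightarrow> ('a \<Rightarrow> 'a \<Rightarrow> real) \<Rightarrow> ('a \<Rightarrow> real) \<Rightarrow> bool" where
  "reversible_markov_chain \<Omega> Q \<pi> \<longleftrightarrow>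
     finite \<Omega> \<and> \<Omega> \<noteq> {} \<and>
     (\<forall>x\<in>\<Omega>. \<forall>y\<in>\<Omega>. Q x y \<ge> 0) \<and>
     (\<forall>x\<in>\<Omega>. (\<Sum>y\<in>\<Omega>. Q x y) = 1) \<and>
     (\<forall>x\<in>\<Omega>. \<pi> x > 0) \<and> (\<Sum>x\<in>\<Omega>. \<pi> x) = 1 \<and>
     (\<forall>x\<in>\<Omega>. \<forall>y\<in>\<Omega>. \<pi> x * Q x y = \<pi> y * Q y x)"

definition expect :: "'a set \<Rightarrow> ('a \<Rightarrow> real) \<Rightarrow> ('a \<Rightarrow> real) \<Rightarrow> real" where
  "expect \<Omega> \<pi> f = (\<Sum>x\<in>\<Omega>. \<pi> x * f x)"

definition Ent :: "'a set \<Rightarrow> ('a \<Rightarrow> real) \<Rightarrow> ('a \<Rightarrow> real) \<Rightarrow> real" where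
  "Ent \<Omega> \<pi> f = expect \<Omega> \<pi> (\<lambda>x. f x * (ln (f x) - ln (expect \<Omega> \<pi> f)))"

end

theory Submission
  imports Defs
begin

lemma ln_ge_1m: "0 < (t::real) \<Longrightarrow> 1 - 1/t \<le> ln t"
proof -
  assume t: "0 < t"
  have "ln (1/t) \<le> 1/t - 1" using t by (intro ln_le_minus_one) simp
  thus ?thesis using t by (simp add: ln_div)
qed

lemma big_case: "1 \<le> (t::real) \<Longrightarrow> (t - 1) * ln t \<le> 2 * (t * ln t - t + 1)"
proof -
  assume t: "1 \<le> t"
  let ?k = "\<lambda>x::real. (x + 1) * ln x - 2 * (x - 1)"
  have "?k 1 \<le> ?k t"
  proof (rule DERIV_nonneg_imp_nondecreasing[OF t])
    fix x :: real assume x: "1 \<le> x" "x \<le> t"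
    have "DERIV ?k x :> (1 * ln x + (x + 1) * (1/x) - 2 * 1)"
      using x by (auto intro!: derivative_eq_intros)
    moreover have "1 * ln x + (x + 1) * (1/x) - 2 * 1 \<ge> 0"
      using ln_ge_1m[of x] x by (simp add: field_simps)
    ultimately show "\<exists>y. DERIV ?k x :> y \<and> y \<ge> 0" by blast
  qed
  thus ?thesis by (simp add: algebra_simps)
qed

lemma h_case: "0 < (t::real) \<Longrightarrow> t \<le> 1 \<Longrightarrow> t * (- ln t) \<le> (1 - t) * (1 + t) / 2"
proof -
  assume t: "0 < t" "t \<le> 1"
  let ?h = "\<lambda>x::real. (1 - x) * (1 + x) / 2 + x * ln x"
  have "?h 1 \<le> ?h t"
  proof (rule DERIV_nonpos_imp_nonincreasing[OF t(2)])
    fix x :: real assume x: "t \<le> x" "x \<le> 1"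
    have "DERIV ?h x :> ((-1 * (1 + x) + (1 - x) * 1) / 2 + (1 * ln x + x * (1/x)))"
      using x t by (auto intro!: derivative_eq_intros)
    moreover have "(-1 * (1 + x) + (1 - x) * 1) / 2 + (1 * ln x + x * (1/x)) \<le> 0"
      using ln_le_minus_one[of x] x t by simp
    ultimately show "\<exists>y. DERIV ?h x :> y \<and> y \<le> 0" by blast
  qed
  thus ?thesis by simp
qed

lemma small_case: "0 < (t::real) \<Longrightarrow> t \<le> 1/2 \<Longrightarrow> t * (- ln t) \<le> (1 - t) * (7/8)"
proof -
  assume t: "0 < t" "t \<le> 1/2"
  define s where "s = sqrt t"
  have s: "0 < s" "s * s = t" using t by (auto simp: s_def)
  have "ln (1/s) \<le> 1/s - 1" using s by (intro ln_le_minus_one) simp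
  hence l: "- ln s \<le> 1/s - 1" using s by (simp add: ln_div)
  have "ln (s * s) = ln s + ln s" using s(1) by (simp add: ln_mult)
  hence lt: "- ln t = 2 * (- ln s)" using s(2) by simp
  have "t * (- ln t) = t * (2 * (- ln s))" using lt by simp
  also have "\<dots> \<le> t * (2 * (1/s - 1))" using l t by (intro mult_left_mono) auto
  also have "\<dots> = s * s * 2 * (1/s - 1)" using s(2) by simp
  finally have "t * (- ln t) \<le> s * s * 2 * (1/s - 1)" .
  also have "\<dots> = 2 * s - 2 * s * s" using s(1) by (simp add: field_simps)
  also have "\<dots> \<le> (1 - t) * (7/8)"
  proof -
    have "s < 7/9"
    proof (rule ccontr)
      assume "\<not> s < 7/9"
      hence "s * s \<ge> 7/9 * (7/9)" using mult_mono[of "7/9" s "7/9" s] by linarith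
      thus False using s t by simp
    qed
    hence "(9*s - 7) * (s - 1) \<ge> 0" by (intro mult_nonpos_nonpos) auto
    thus ?thesis using s by (simp add: algebra_simps)
  qed
  finally show ?thesis .
qed

lemma pointwise:
  fixes t \<delta> :: real
  assumes d: "0 < \<delta>" "\<delta> \<le> 1/2" and t: "\<delta> \<le> t"
  shows "(t - 1) * ln t \<le> 8 * \<bar>ln \<delta>\<bar> * (t * ln t - t + 1)"
proof -
  have tp: "0 < t" using d t by simp
  have ln2: "ln 2 \<ge> (1/2::real)" using ln_ge_1m[of 2] by simp
  have "ln \<delta> \<le> ln (1/2)" using d by simp
  hence L: "\<bar>ln \<delta>\<bar> \<ge> 1/2" using ln2 by (simp add: ln_div)
  have Lt: "ln \<delta> \<le> ln t" using d t by simp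
  show ?thesis
  proof (cases "1 \<le> t")
    case True
    have phi: "t * ln t - t + 1 \<ge> 0" using ln_ge_1m[OF tp] tp by (simp add: field_simps)
    have "(t - 1) * ln t \<le> 2 * (t * ln t - t + 1)" using big_case[OF True] .
    also have "\<dots> \<le> 8 * \<bar>ln \<delta>\<bar> * (t * ln t - t + 1)"
      using L phi by (intro mult_right_mono) auto
    finally show ?thesis .
  next
    case False
    define u where "u = - ln t"
    have u: "0 \<le> u" using False tp by (simp add: u_def)
    have uL: "u \<le> \<bar>ln \<delta>\<bar>" using Lt by (simp add: u_def)
    have eq: "(t - 1) * ln t = (1 - t) * u" "t * ln t - t + 1 = 1 - t - t * u"
      by (simp_all add: u_def algebra_simps)
    show ?thesis
    proof (cases "t \<le> 1/2")
      case True
      have "t * u \<le> (1 - t) * (7/8)" using small_case[OF tp True] by (simp add: u_def)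
      hence phi: "1 - t - t*u \<ge> (1 - t)/8" by simp
      have "(1 - t) * u \<le> (1 - t) * \<bar>ln \<delta>\<bar>" using uL False by (intro mult_left_mono) auto
      also have "\<dots> = 8 * \<bar>ln \<delta>\<bar> * ((1 - t)/8)" by simp
      also have "\<dots> \<le> 8 * \<bar>ln \<delta>\<bar> * (1 - t - t*u)"
        using mult_left_mono[OF phi, of "8 * \<bar>ln \<delta>\<bar>"] by simp
      finally show ?thesis unfolding eq .
    next
      case f2: False
      have "t * u \<le> (1 - t) * (1 + t) / 2" using h_case[OF tp] False by (simp add: u_def)
      moreover have "(1 - t) * (1 - t) / 2 = 1 - t - (1 - t) * (1 + t) / 2" by (simp add: field_simps)
      ultimately have phi: "1 - t - t*u \<ge> (1 - t) * (1 - t) / 2" by linarith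
      have "ln (1/t) \<le> 1/t - 1" using tp by (intro ln_le_minus_one) simp
      hence "u \<le> 1/t - 1" using tp by (simp add: ln_div u_def)
      also have "\<dots> = (1 - t) / t" using tp by (simp add: field_simps)
      also have "\<dots> \<le> 2 * (1 - t)"
      proof -
        have "(2*t-1)*(1-t) \<ge> 0" using f2 False by (intro mult_nonneg_nonneg) auto
        hence "1 + t * (t * 2) \<le> t * 3" by (simp add: algebra_simps)
        thus ?thesis using tp by (simp add: field_simps)
      qed
      finally have u2: "u \<le> 2 * (1 - t)" .
      have "(1 - t) * u \<le> (1 - t) * (2 * (1 - t))" using u2 False by (intro mult_left_mono) auto
      also have "\<dots> = 4 * (1/2) * ((1 - t) * (1 - t) / 2) * 2" by simp
      also have "\<dots> \<le> 4 * \<bar>ln \<delta>\<bar> * ((1 - t) * (1 - t) / 2) * 2"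
        using L by (intro mult_right_mono) auto
      also have "\<dots> \<le> 4 * \<bar>ln \<delta>\<bar> * (1 - t - t*u) * 2"
        using phi L by (intro mult_right_mono mult_left_mono) auto
      also have "\<dots> = 8 * \<bar>ln \<delta>\<bar> * (1 - t - t*u)" by simp
      finally show ?thesis unfolding eq by (simp add: mult.assoc)
    qed
  qed
qed

theorem mainTheorem13:
  "\<exists>C'::real. C' > 0 \<and>
    (\<forall>(\<Omega>::nat set) Q \<pi> f \<delta>.
       reversible_markov_chain \<Omega> Q \<pi> \<longrightarrow>
       (\<forall>x\<in>\<Omega>. f x > 0) \<longrightarrow>
       expect \<Omega> \<pi> f = 1 \<longrightarrow>
       0 < \<delta> \<longrightarrow> \<delta> \<le> 1/2 \<longrightarrow>
       (\<forall>x\<in>\<Omega>. f x \<ge> \<delta>) \<longrightarrow>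
       (\<Sum>x\<in>\<Omega>. \<pi> x * (f x - 1) * ln (f x)) \<le> C' * \<bar>ln \<delta>\<bar> * Ent \<Omega> \<pi> f)"
proof (intro exI[of _ 8] conjI allI impI)
  fix \<Omega> :: "nat set" and Q \<pi> and f :: "nat \<Rightarrow> real" and \<delta> :: real
  assume M: "reversible_markov_chain \<Omega> Q \<pi>" and fp: "\<forall>x\<in>\<Omega>. f x > 0"
    and E: "expect \<Omega> \<pi> f = 1" and d: "0 < \<delta>" "\<delta> \<le> 1/2" and fd: "\<forall>x\<in>\<Omega>. f x \<ge> \<delta>"
  have pi: "\<forall>x\<in>\<Omega>. \<pi> x > 0" "(\<Sum>x\<in>\<Omega>. \<pi> x) = 1" using M by (auto simp: reversible_markov_chain_def)
  have Ef: "(\<Sum>x\<in>\<Omega>. \<pi> x * f x) = 1" using E by (simp add: expect_def)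
  have "(\<Sum>x\<in>\<Omega>. \<pi> x * (f x - 1) * ln (f x))
      \<le> (\<Sum>x\<in>\<Omega>. \<pi> x * (8 * \<bar>ln \<delta>\<bar> * (f x * ln (f x) - f x + 1)))"
  proof (rule sum_mono)
    fix x assume x: "x \<in> \<Omega>"
    have "\<pi> x * ((f x - 1) * ln (f x)) \<le> \<pi> x * (8 * \<bar>ln \<delta>\<bar> * (f x * ln (f x) - f x + 1))"
      using pointwise[OF d fd[rule_format, OF x]] pi(1) x by (intro mult_left_mono) auto
    thus "\<pi> x * (f x - 1) * ln (f x) \<le> \<pi> x * (8 * \<bar>ln \<delta>\<bar> * (f x * ln (f x) - f x + 1))"
      by (simp add: mult.assoc)
  qed
  also have "\<dots> = 8 * \<bar>ln \<delta>\<bar> * ((\<Sum>x\<in>\<Omega>. \<pi> x * (f x * ln (f x))) - (\<Sum>x\<in>\<Omega>. \<pi> x * f x) + (\<Sum>x\<in>\<Omega>. \<pi> x))"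
  proof -
    have "(\<Sum>x\<in>\<Omega>. \<pi> x * (8 * \<bar>ln \<delta>\<bar> * (f x * ln (f x) - f x + 1)))
       = (\<Sum>x\<in>\<Omega>. 8 * \<bar>ln \<delta>\<bar> * (\<pi> x * (f x * ln (f x)) - \<pi> x * f x + \<pi> x))"
      by (rule sum.cong) (simp_all add: algebra_simps)
    also have "\<dots> = 8 * \<bar>ln \<delta>\<bar> * (\<Sum>x\<in>\<Omega>. (\<pi> x * (f x * ln (f x)) - \<pi> x * f x + \<pi> x))"
      by (simp add: sum_distrib_left)
    also have "(\<Sum>x\<in>\<Omega>. (\<pi> x * (f x * ln (f x)) - \<pi> x * f x + \<pi> x))
       = (\<Sum>x\<in>\<Omega>. \<pi> x * (f x * ln (f x))) - (\<Sum>x\<in>\<Omega>. \<pi> x * f x) + (\<Sum>x\<in>\<Omega>. \<pi> x)"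
      by (simp add: sum_subtractf sum.distrib)
    finally show ?thesis .
  qed
  also have "\<dots> = 8 * \<bar>ln \<delta>\<bar> * Ent \<Omega> \<pi> f"
    using Ef pi(2) E by (simp add: Ent_def expect_def)
  finally show "(\<Sum>x\<in>\<Omega>. \<pi> x * (f x - 1) * ln (f x)) \<le> 8 * \<bar>ln \<delta>\<bar> * Ent \<Omega> \<pi> f" .
qed simp

end
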